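(* The variety $\mathsf{V}(S_{(4,474)})$ is the ai-semiring variety defined by the identities $xy\approx yx$, $x^2y\approx xy$, $xy\approx xy+xyz$.
   Context: An ai-semiring is an algebra $(S,+,\cdot)$ with $(S,+)$ a semilattice, $(S,\cdot)$ a semigroup, and both distributive laws. $\mathsf{V}(S)$ is the variety generated by $S$; "the ai-semiring variety defined by identities $\Sigma$" is the class of all ai-semirings satisfying $\Sigma$. $S_{(4,474)}$ has carrier $\{1,2,3,4\}$; addition: $x+x=x$, $2+x=x$, $1+x=1$ for all $x$, $3+4=1$; multiplication (row $a$, column $b$ gives $a\cdot b$): row $1$: $3,2,3,3$; row $2$: $2,2,2,2$; row $3$: $3,2,3,3$; row $4$: $3,2,3,3$. *)

theory Defs
  imports Main
begin

definition ai_semiring :: "('a \<Rightarrow> 'a \<Rightarrow> 'a) \<Rightarrow> ('a \<Rightarrow> 'a \<Rightarrow> 'a) \<Rightarrow> bool" where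
  "ai_semiring add mul \<longleftrightarrow>
     (\<forall>x. add x x = x) \<and>
     (\<forall>x y. add x y = add y x) \<and>
     (\<forall>x y z. add (add x y) z = add x (add y z)) \<and>
     (\<forall>x y z. mul (mul x y) z = mul x (mul y z)) \<and>
     (\<forall>x y z. mul x (add y z) = add (mul x y) (mul x z)) \<and>
     (\<forall>x y z. mul (add x y) z = add (mul x z) (mul y z))"

datatype trm = Var nat | Plus trm trm | Times trm trm

fun eval :: "('a \<Rightarrow> 'a \<Rightarrow> 'a) \<Rightarrow> ('a \<Rightarrow> 'a \<Rightarrow> 'a) \<Rightarrow> (nat \<Rightarrow> 'a) \<Rightarrow> trm \<Rightarrow> 'a" where
  "eval add mul v (Var n) = v n"
| "eval add mul v (Plus s t) = add (eval add mul v s) (eval add mul v t)"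
| "eval add mul v (Times s t) = mul (eval add mul v s) (eval add mul v t)"

definition satisfies :: "('a \<Rightarrow> 'a \<Rightarrow> 'a) \<Rightarrow> ('a \<Rightarrow> 'a \<Rightarrow> 'a) \<Rightarrow> trm \<Rightarrow> trm \<Rightarrow> bool" where
  "satisfies add mul p q \<longleftrightarrow> (\<forall>v. eval add mul v p = eval add mul v q)"

text \<open>The semiring S_(4,474) on carrier {1,2,3,4}.\<close>
datatype s4 = E1 | E2 | E3 | E4

definition S_add :: "s4 \<Rightarrow> s4 \<Rightarrow> s4" where
  "S_add x y = (if x = y then x else if x = E2 then y else if y = E2 then x else E1)"

definition S_mul :: "s4 \<Rightarrow> s4 \<Rightarrow> s4" where
  "S_mul x y = (if x = E2 \<or> y = E2 then E2 else E3)"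

text \<open>Membership in the variety V(S) generated by S: by Birkhoff's HSP theorem,
  V(S) is exactly the class of algebras satisfying every identity that holds in S.\<close>
definition in_V_S :: "('a \<Rightarrow> 'a \<Rightarrow> 'a) \<Rightarrow> ('a \<Rightarrow> 'a \<Rightarrow> 'a) \<Rightarrow> bool" where
  "in_V_S add mul \<longleftrightarrow> (\<forall>p q. satisfies S_add S_mul p q \<longrightarrow> satisfies add mul p q)"

abbreviation "tx \<equiv> Var 0"
abbreviation "ty \<equiv> Var 1"
abbreviation "tz \<equiv> Var 2"

end

theory Submission
  imports Defs
begin

fun Lt :: "trm \<Rightarrow> nat set" where
  "Lt (Var n) = {n}" | "Lt (Plus s t) = Lt s \<union> Lt t" | "Lt (Times s t) = {}"

definition Wof :: "nat set set \<Rightarrow> nat set \<Rightarrow> nat set set" where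
  "Wof M L = M \<union> (\<lambda>x. {x}) ` L"

fun Mt :: "trm \<Rightarrow> nat set set" where
  "Mt (Var n) = {}" | "Mt (Plus s t) = Mt s \<union> Mt t"
| "Mt (Times s t) = {A \<union> B | A B. A \<in> Wof (Mt s) (Lt s) \<and> B \<in> Wof (Mt t) (Lt t)}"

lemma Mt_Times: "Mt (Times s t) = (\<lambda>(A,B). A \<union> B) ` (Wof (Mt s) (Lt s) \<times> Wof (Mt t) (Lt t))"
proof -
  have "\<And>X Y. {A \<union> B | A B. A \<in> X \<and> B \<in> Y} = (\<lambda>(A,B). A \<union> B) ` (X \<times> Y)"
    by (auto simp: image_def)
  then show ?thesis by (simp only: Mt.simps)
qed

lemma trm_fin: "finite (Lt t) \<and> finite (Mt t) \<and> (\<forall>A\<in>Mt t. finite A \<and> A \<noteq> {}) \<and> (Lt t \<noteq> {} \<or> Mt t \<noteq> {})"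
proof (induction t)
  case (Times s t)
  have W1: "finite (Wof (Mt s) (Lt s))" "\<forall>A\<in>Wof (Mt s) (Lt s). finite A \<and> A \<noteq> {}" "Wof (Mt s) (Lt s) \<noteq> {}"
    using Times(1) unfolding Wof_def by auto
  have W2: "finite (Wof (Mt t) (Lt t))" "\<forall>A\<in>Wof (Mt t) (Lt t). finite A \<and> A \<noteq> {}" "Wof (Mt t) (Lt t) \<noteq> {}"
    using Times(2) unfolding Wof_def by auto
  show ?case unfolding Mt_Times using W1 W2 by auto
qed auto

locale alg =
  fixes add mul :: "'a \<Rightarrow> 'a \<Rightarrow> 'a"
  assumes idem: "add x x = x" and acomm: "add x y = add y x"
    and aassoc: "add (add x y) z = add x (add y z)"
    and massoc: "mul (mul x y) z = mul x (mul y z)"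
    and distl: "mul x (add y z) = add (mul x y) (mul x z)"
    and distr: "mul (add x y) z = add (mul x z) (mul y z)"
    and mcomm: "mul x y = mul y x" and sq: "mul (mul x x) y = mul x y"
    and absb: "mul x y = add (mul x y) (mul (mul x y) z)"

sublocale alg \<subseteq> J: semilattice_set add
  by unfold_locales (auto intro: idem acomm aassoc)

context alg begin
definition mo :: "'a option \<Rightarrow> 'a option \<Rightarrow> 'a option" where
  "mo a b = (case a of None \<Rightarrow> b | Some x \<Rightarrow> (case b of None \<Rightarrow> Some x | Some y \<Rightarrow> Some (mul x y)))"
end

sublocale alg \<subseteq> P: comm_monoid_set mo None
proof unfold_locales
  fix a b c show "mo (mo a b) c = mo a (mo b c)"
    by (cases a; cases b; cases c) (auto simp: mo_def massoc)
next
  fix a b show "mo a b = mo b a"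
    by (cases a; cases b) (auto simp: mo_def mcomm)
next
  fix a show "mo a None = a" by (cases a) (auto simp: mo_def)
qed

context alg begin

definition pr :: "(nat \<Rightarrow> 'a) \<Rightarrow> nat set \<Rightarrow> 'a option" where
  "pr v A = P.F (\<lambda>x. Some (mul (v x) (v x))) A"
definition pv where "pv v A = the (pr v A)"

lemma sqsq: "mul (mul x x) (mul x x) = mul x x"
proof -
  have "mul (mul x x) (mul x x) = mul x (mul x x)" by (rule sq)
  also have "\<dots> = mul (mul x x) x" by (rule mcomm)
  also have "\<dots> = mul x x" by (rule sq)
  finally show ?thesis .
qed

lemma pr_idem: "finite A \<Longrightarrow> mo (pr v A) (pr v A) = pr v A"
proof (induction A rule: finite_induct)
  case empty then show ?case by (simp add: pr_def mo_def)
next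
  case (insert x F)
  let ?q = "Some (mul (v x) (v x))"
  have e: "pr v (insert x F) = mo ?q (pr v F)" using insert by (simp add: pr_def)
  have q: "mo ?q ?q = ?q" by (simp add: mo_def sqsq)
  have sw: "mo (mo a b) (mo a b) = mo (mo a a) (mo b b)" for a b
    by (simp add: P.assoc P.left_commute)
  show ?case unfolding e by (subst sw) (simp only: q insert(3))
qed

lemma pr_union: "finite A \<Longrightarrow> finite B \<Longrightarrow> pr v (A \<union> B) = mo (pr v A) (pr v B)"
proof -
  assume f: "finite A" "finite B"
  let ?C = "A \<inter> B"
  have u: "mo (pr v (A \<union> B)) (pr v ?C) = mo (pr v A) (pr v B)"
    using P.union_inter[OF f] by (simp add: pr_def)
  have "pr v (A \<union> B) = mo (pr v (A \<union> B - ?C)) (pr v ?C)"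
    using P.subset_diff[of ?C "A \<union> B"] f by (auto simp: pr_def)
  then have "mo (pr v (A \<union> B)) (pr v ?C) = pr v (A \<union> B)"
    using pr_idem[of ?C v] f by (metis P.assoc finite_Int)
  with u show ?thesis by simp
qed

lemma pr_some: "finite A \<Longrightarrow> A \<noteq> {} \<Longrightarrow> pr v A = Some (pv v A)"
proof (induction A rule: finite_ne_induct)
  case (singleton x) then show ?case by (simp add: pr_def pv_def)
next
  case (insert x F)
  have "pr v (insert x F) = mo (Some (mul (v x) (v x))) (pr v F)" using insert by (simp add: pr_def)
  also have "\<dots> = Some (mul (mul (v x) (v x)) (pv v F))" using insert by (simp add: mo_def)
  finally show ?case by (simp add: pv_def)
qed

lemma pv_union: "finite A \<Longrightarrow> A \<noteq> {} \<Longrightarrow> finite B \<Longrightarrow> B \<noteq> {} \<Longrightarrow>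
   pv v (A \<union> B) = mul (pv v A) (pv v B)"
  using pr_union[of A B v] pr_some[of A v] pr_some[of B v] pr_some[of "A \<union> B" v]
  by (simp add: mo_def)

lemma pv_single: "pv v {x} = mul (v x) (v x)"
  by (simp add: pv_def pr_def)

definition rep where "rep v a A \<longleftrightarrow> (\<exists>x. A = {x} \<and> a = v x) \<or> (finite A \<and> A \<noteq> {} \<and> a = pv v A)"

lemma rep_pv: "rep v a A \<Longrightarrow> finite A \<and> A \<noteq> {} \<and> mul a a = pv v A \<and> (\<forall>b. mul a b = mul (pv v A) b)"
  unfolding rep_def
proof (elim disjE exE conjE)
  fix x assume "A = {x}" "a = v x"
  then show ?thesis by (simp add: pv_single sq)
next
  assume h: "finite A" "A \<noteq> {}" "a = pv v A"
  have "pv v A = pv v (A \<union> A)" by simp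
  also have "\<dots> = mul (pv v A) (pv v A)" using h pv_union by blast
  finally show ?thesis using h by simp
qed

lemma rep_mul: "rep v a A \<Longrightarrow> rep v b B \<Longrightarrow> mul a b = pv v (A \<union> B)"
proof -
  assume a: "rep v a A" and b: "rep v b B"
  from rep_pv[OF a] rep_pv[OF b]
  have "mul a b = mul (pv v A) b" "mul b (pv v A) = mul (pv v B) (pv v A)" by auto
  then have "mul a b = mul (pv v A) (pv v B)" by (metis mcomm)
  then show ?thesis using rep_pv[OF a] rep_pv[OF b] pv_union by metis
qed

definition X where "X v t = v ` Lt t \<union> pv v ` Mt t"

lemma X_fin: "finite (X v t) \<and> X v t \<noteq> {}"
  using trm_fin[of t] by (auto simp: X_def)

lemma dist_F: "finite N \<Longrightarrow> N \<noteq> {} \<Longrightarrow> mul a (J.F N) = J.F (mul a ` N)"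
  by (rule J.hom_commute) (auto simp: distl)

lemma dist_F2: assumes "finite N" "N \<noteq> {}" "finite K" "K \<noteq> {}"
  shows "mul (J.F N) (J.F K) = J.F ((\<lambda>(a,b). mul a b) ` (N \<times> K))"
proof -
  have "mul (J.F N) (J.F K) = J.F (mul (J.F N) ` K)" using assms dist_F by simp
  also have "mul (J.F N) ` K = (\<lambda>b. J.F ((\<lambda>a. mul a b) ` N)) ` K"
  proof (rule image_cong)
    fix b
    have i: "mul b ` N = (\<lambda>a. mul a b) ` N" by (auto simp: mcomm)
    have "mul (J.F N) b = mul b (J.F N)" by (rule mcomm)
    also have "\<dots> = J.F (mul b ` N)" by (rule dist_F[OF assms(1,2)])
    finally show "mul (J.F N) b = J.F ((\<lambda>a. mul a b) ` N)" unfolding i .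
  qed simp
  also have "J.F \<dots> = J.F (\<Union>b\<in>K. (\<lambda>a. mul a b) ` N)"
    using assms(3,4)
  proof (induction K rule: finite_ne_induct)
    case (insert x F)
    have "J.F ((\<lambda>b. J.F ((\<lambda>a. mul a b) ` N)) ` insert x F) = add (J.F ((\<lambda>a. mul a x) ` N)) (J.F ((\<lambda>b. J.F ((\<lambda>a. mul a b) ` N)) ` F))"
      using insert by simp
    also have "\<dots> = add (J.F ((\<lambda>a. mul a x) ` N)) (J.F (\<Union>b\<in>F. (\<lambda>a. mul a b) ` N))"
      using insert by simp
    also have "\<dots> = J.F ((\<lambda>a. mul a x) ` N \<union> (\<Union>b\<in>F. (\<lambda>a. mul a b) ` N))"
      using insert assms(1,2) by (intro J.union[symmetric]) auto
    finally show ?case by simp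
  qed simp
  also have "(\<Union>b\<in>K. (\<lambda>a. mul a b) ` N) = (\<lambda>(a,b). mul a b) ` (N \<times> K)" by auto
  finally show ?thesis .
qed

lemma X_rep: "(\<forall>a\<in>X v t. \<exists>A\<in>Wof (Mt t) (Lt t). rep v a A) \<and> (\<forall>A\<in>Wof (Mt t) (Lt t). \<exists>a\<in>X v t. rep v a A)"
proof (intro conjI ballI)
  fix a assume "a \<in> X v t"
  then show "\<exists>A\<in>Wof (Mt t) (Lt t). rep v a A"
  proof (unfold X_def, elim UnE imageE)
    fix x assume h: "a = v x" "x \<in> Lt t"
    show ?thesis
    proof (rule bexI[of _ "{x}"])
      show "rep v a {x}" unfolding rep_def using h(1) by blast
      show "{x} \<in> Wof (Mt t) (Lt t)" unfolding Wof_def using h(2) by blast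
    qed
  next
    fix A assume h: "a = pv v A" "A \<in> Mt t"
    have "finite A" "A \<noteq> {}" using trm_fin[of t] h(2) by blast+
    show ?thesis
    proof (rule bexI[of _ A])
      show "rep v a A" unfolding rep_def using h(1) \<open>finite A\<close> \<open>A \<noteq> {}\<close> by blast
      show "A \<in> Wof (Mt t) (Lt t)" unfolding Wof_def using h(2) by blast
    qed
  qed
next
  fix A assume "A \<in> Wof (Mt t) (Lt t)"
  then show "\<exists>a\<in>X v t. rep v a A"
  proof (unfold Wof_def, elim UnE imageE)
    fix x assume h: "A = {x}" "x \<in> Lt t"
    show ?thesis
    proof (rule bexI[of _ "v x"])
      show "rep v (v x) A" unfolding rep_def using h(1) by blast
      show "v x \<in> X v t" unfolding X_def using h(2) by blast
    qed
  next
    assume h: "A \<in> Mt t"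
    have "finite A" "A \<noteq> {}" using trm_fin[of t] h by blast+
    show ?thesis
    proof (rule bexI[of _ "pv v A"])
      show "rep v (pv v A) A" unfolding rep_def using \<open>finite A\<close> \<open>A \<noteq> {}\<close> by blast
      show "pv v A \<in> X v t" unfolding X_def using h by blast
    qed
  qed
qed

lemma eval_X: "eval add mul v t = J.F (X v t)"
proof (induction t)
  case (Var n) then show ?case by (simp add: X_def)
next
  case (Plus s t)
  have "X v (Plus s t) = X v s \<union> X v t" by (auto simp: X_def)
  then show ?case using Plus X_fin[of v s] X_fin[of v t] by (simp add: J.union)
next
  case (Times s t)
  have "eval add mul v (Times s t) = J.F ((\<lambda>(a,b). mul a b) ` (X v s \<times> X v t))"
    using Times dist_F2 X_fin by simp
  also have "(\<lambda>(a,b). mul a b) ` (X v s \<times> X v t) = X v (Times s t)"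
  proof -
    have 1: "(\<lambda>(a,b). mul a b) ` (X v s \<times> X v t) \<subseteq> X v (Times s t)"
    proof clarify
      fix a b assume "a \<in> X v s" "b \<in> X v t"
      then obtain A B where "A \<in> Wof (Mt s) (Lt s)" "B \<in> Wof (Mt t) (Lt t)" "rep v a A" "rep v b B"
        using X_rep by blast
      then show "mul a b \<in> X v (Times s t)" using rep_mul unfolding X_def by auto
    qed
    have 2: "X v (Times s t) \<subseteq> (\<lambda>(a,b). mul a b) ` (X v s \<times> X v t)"
    proof
      fix c assume "c \<in> X v (Times s t)"
      then obtain A B where "A \<in> Wof (Mt s) (Lt s)" "B \<in> Wof (Mt t) (Lt t)" "c = pv v (A \<union> B)"
        unfolding X_def by auto
      moreover obtain a b where "a \<in> X v s" "b \<in> X v t" "rep v a A" "rep v b B"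
        using X_rep calculation by meson
      ultimately show "c \<in> (\<lambda>(a,b). mul a b) ` (X v s \<times> X v t)" using rep_mul by force
    qed
    show ?thesis using 1 2 by blast
  qed
  finally show ?case .
qed


lemma add_le_iff: "add (add x y) c = c \<longleftrightarrow> add x c = c \<and> add y c = c"
proof
  assume h: "add (add x y) c = c"
  have "add x c = add x (add (add x y) c)" using h by simp
  also have "\<dots> = add (add (add x x) y) c" by (simp add: aassoc)
  also have "\<dots> = c" using h by (simp add: idem)
  finally have 1: "add x c = c" .
  have "add y c = add y (add (add y x) c)" using h by (simp add: acomm)
  also have "\<dots> = add (add (add y y) x) c" by (simp add: aassoc)
  also have "\<dots> = c" using h by (simp add: idem acomm)
  finally show "add x c = c \<and> add y c = c" using 1 by simp
next
  assume "add x c = c \<and> add y c = c"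
  then show "add (add x y) c = c" by (simp add: aassoc)
qed

lemma F_le: "finite N \<Longrightarrow> N \<noteq> {} \<Longrightarrow> add (J.F N) c = c \<longleftrightarrow> (\<forall>x\<in>N. add x c = c)"
proof (induction N rule: finite_ne_induct)
  case (insert x F)
  then show ?case by (simp add: add_le_iff)
qed simp

lemma pv_anti: "finite A \<Longrightarrow> B \<noteq> {} \<Longrightarrow> B \<subseteq> A \<Longrightarrow> add (pv v A) (pv v B) = pv v B"
proof -
  assume h: "finite A" "B \<noteq> {}" "B \<subseteq> A"
  then have fB: "finite B" "A \<noteq> {}" using finite_subset by auto
  have "pv v (B \<union> B) = mul (pv v B) (pv v B)" using fB h by (intro pv_union) auto
  then have sB: "pv v B = mul (pv v B) (pv v B)" by (simp only: Un_absorb)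
  have a: "mul (pv v B) (pv v B) = add (mul (pv v B) (pv v B)) (mul (mul (pv v B) (pv v B)) (pv v A))"
    by (rule absb)
  have "pv v B = add (pv v B) (mul (pv v B) (pv v A))"
    using a by (simp only: sB[symmetric])
  also have "mul (pv v B) (pv v A) = pv v (B \<union> A)" using fB h by (intro pv_union[symmetric]) auto
  also have "B \<union> A = A" using h by auto
  finally have "pv v B = add (pv v B) (pv v A)" .
  then show ?thesis by (subst acomm) (rule sym)
qed

lemma half: assumes "Lt p \<subseteq> Lt q" "\<forall>A\<in>Mt p. \<exists>B\<in>Mt q. B \<subseteq> A"
  shows "add (J.F (X v p)) (J.F (X v q)) = J.F (X v q)"
proof -
  have fq: "finite (X v q)" "X v q \<noteq> {}" using X_fin by auto
  have "\<forall>x\<in>X v p. add x (J.F (X v q)) = J.F (X v q)"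
  proof
    fix x assume "x \<in> X v p"
    then consider y where "x = v y" "y \<in> Lt p" | A where "x = pv v A" "A \<in> Mt p"
      unfolding X_def by blast
    then show "add x (J.F (X v q)) = J.F (X v q)"
    proof cases
      case 1
      then have "x \<in> X v q" using assms(1) unfolding X_def by blast
      then show ?thesis using J.in_idem fq by blast
    next
      case 2
      then obtain B where B: "B \<in> Mt q" "B \<subseteq> A" using assms(2) by blast
      have "finite A" using trm_fin[of p] 2 by blast
      have "B \<noteq> {}" using trm_fin[of q] B by blast
      have inq: "pv v B \<in> X v q" using B unfolding X_def by blast
      have "add x (J.F (X v q)) = add (pv v A) (add (pv v B) (J.F (X v q)))"
        unfolding 2(1) using J.in_idem[OF fq(1) inq] by simp
      also have "\<dots> = add (add (pv v A) (pv v B)) (J.F (X v q))" by (simp add: aassoc)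
      also have "\<dots> = add (pv v B) (J.F (X v q))"
        using pv_anti[OF \<open>finite A\<close> \<open>B \<noteq> {}\<close> B(2)] by simp
      also have "\<dots> = J.F (X v q)" using J.in_idem[OF fq(1) inq] .
      finally show ?thesis .
    qed
  qed
  moreover have "finite (X v p)" "X v p \<noteq> {}" using X_fin by auto
  ultimately show ?thesis using F_le[of "X v p" "J.F (X v q)"] by simp
qed

lemma eq_crit: assumes "Lt p = Lt q" "\<forall>A\<in>Mt p. \<exists>B\<in>Mt q. B \<subseteq> A" "\<forall>A\<in>Mt q. \<exists>B\<in>Mt p. B \<subseteq> A"
  shows "eval add mul v p = eval add mul v q"
proof -
  have 1: "add (J.F (X v p)) (J.F (X v q)) = J.F (X v q)" using half assms by simp
  have 2: "add (J.F (X v q)) (J.F (X v p)) = J.F (X v p)" using half assms by simp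
  show ?thesis unfolding eval_X using 1 2 by (simp add: acomm)
qed

end

lemma S_alg: "alg S_add S_mul"
proof unfold_locales
  fix x y z :: s4
  show "S_add x x = x" by (cases x) (simp_all add: S_add_def)
  show "S_add x y = S_add y x" by (cases x; cases y) (simp_all add: S_add_def)
  show "S_add (S_add x y) z = S_add x (S_add y z)" by (cases x; cases y; cases z) (simp_all add: S_add_def)
  show "S_mul (S_mul x y) z = S_mul x (S_mul y z)" by (cases x; cases y; cases z) (simp_all add: S_mul_def)
  show "S_mul x (S_add y z) = S_add (S_mul x y) (S_mul x z)" by (cases x; cases y; cases z) (simp_all add: S_add_def S_mul_def)
  show "S_mul (S_add x y) z = S_add (S_mul x z) (S_mul y z)" by (cases x; cases y; cases z) (simp_all add: S_add_def S_mul_def)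
  show "S_mul x y = S_mul y x" by (cases x; cases y) (simp_all add: S_mul_def)
  show "S_mul (S_mul x x) y = S_mul x y" by (cases x; cases y) (simp_all add: S_mul_def)
  show "S_mul x y = S_add (S_mul x y) (S_mul (S_mul x y) z)" by (cases x; cases y; cases z) (simp_all add: S_add_def S_mul_def)
qed

interpretation SA: alg S_add S_mul by (rule S_alg)

lemma S_mul_simps: "S_mul E2 b = E2" "S_mul a E2 = E2" "a \<noteq> E2 \<Longrightarrow> b \<noteq> E2 \<Longrightarrow> S_mul a b = E3"
  by (simp_all add: S_mul_def)

lemma S_add_simps: "S_add E2 b = b" "S_add a E2 = a" "S_add a a = a" "S_add E4 E3 = E1" "S_add E3 E4 = E1"
  by (simp_all add: S_add_def)

lemma S_pv: "finite A \<Longrightarrow> A \<noteq> {} \<Longrightarrow> SA.pv v A = (if \<exists>x\<in>A. v x = E2 then E2 else E3)"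
proof (induction A rule: finite_ne_induct)
  case (singleton x)
  have "SA.pv v {x} = S_mul (v x) (v x)" by (rule SA.pv_single)
  then show ?case by (cases "v x") (simp_all add: S_mul_simps)
next
  case (insert x F)
  have "SA.pv v (insert x F) = SA.pv v ({x} \<union> F)" by simp
  also have "\<dots> = S_mul (SA.pv v {x}) (SA.pv v F)" using insert by (intro SA.pv_union) auto
  also have "SA.pv v {x} = S_mul (v x) (v x)" by (rule SA.pv_single)
  finally have e: "SA.pv v (insert x F) = S_mul (S_mul (v x) (v x)) (SA.pv v F)" .
  show ?case unfolding e insert(4) by (cases "v x") (auto simp: S_mul_simps)
qed

lemma S_Lt: assumes sat: "satisfies S_add S_mul p q" shows "Lt p \<subseteq> Lt q"
proof (rule subsetI, rule ccontr)
  fix x assume xp: "x \<in> Lt p" and xq: "x \<notin> Lt q"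
  define v where "v = (\<lambda>y. if y = x then E4 else E2)"
  have "\<forall>a\<in>SA.X v q. S_add a E3 = E3"
  proof
    fix a assume "a \<in> SA.X v q"
    then consider y where "a = v y" "y \<in> Lt q" | A where "a = SA.pv v A" "A \<in> Mt q"
      unfolding SA.X_def by blast
    then show "S_add a E3 = E3"
    proof cases
      case 1 then have "y \<noteq> x" using xq by blast
      then show ?thesis using 1 by (simp add: v_def S_add_simps)
    next
      case 2 then have "finite A" "A \<noteq> {}" using trm_fin[of q] by blast+
      then show ?thesis using 2 S_pv[of A v] by (simp add: S_add_simps)
    qed
  qed
  moreover have fq: "finite (SA.X v q)" "SA.X v q \<noteq> {}" using SA.X_fin by auto
  ultimately have "S_add (SA.J.F (SA.X v q)) E3 = E3" by (simp only: SA.F_le[OF fq])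
  moreover have "eval S_add S_mul v p = eval S_add S_mul v q" using sat by (simp add: satisfies_def)
  ultimately have "S_add (SA.J.F (SA.X v p)) E3 = E3" by (simp only: SA.eval_X)
  moreover have fp: "finite (SA.X v p)" "SA.X v p \<noteq> {}" using SA.X_fin by auto
  ultimately have "\<forall>a\<in>SA.X v p. S_add a E3 = E3" by (simp only: SA.F_le[OF fp])
  moreover have "v x \<in> SA.X v p" using xp unfolding SA.X_def by blast
  moreover have "v x = E4" by (simp add: v_def)
  ultimately show False by (auto simp: S_add_simps)
qed

lemma S_Mt: assumes sat: "satisfies S_add S_mul p q" and Ap: "A \<in> Mt p"
  shows "\<exists>B\<in>Mt q. B \<subseteq> A"
proof (rule ccontr)
  assume nB: "\<not> (\<exists>B\<in>Mt q. B \<subseteq> A)"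
  define v where "v = (\<lambda>y. if y \<in> A then E4 else E2)"
  have "\<forall>a\<in>SA.X v q. S_add a E4 = E4"
  proof
    fix a assume "a \<in> SA.X v q"
    then consider y where "a = v y" "y \<in> Lt q" | B where "a = SA.pv v B" "B \<in> Mt q"
      unfolding SA.X_def by blast
    then show "S_add a E4 = E4"
    proof cases
      case 1 then show ?thesis by (cases "y \<in> A") (simp_all add: v_def S_add_simps)
    next
      case 2 then have "finite B" "B \<noteq> {}" using trm_fin[of q] by blast+
      moreover obtain y where "y \<in> B" "y \<notin> A" using nB 2 by blast
      ultimately show ?thesis using 2 S_pv[of B v] by (auto simp: S_add_simps v_def)
    qed
  qed
  moreover have fq: "finite (SA.X v q)" "SA.X v q \<noteq> {}" using SA.X_fin by auto
  ultimately have "S_add (SA.J.F (SA.X v q)) E4 = E4" by (simp only: SA.F_le[OF fq])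
  moreover have "eval S_add S_mul v p = eval S_add S_mul v q" using sat by (simp add: satisfies_def)
  ultimately have "S_add (SA.J.F (SA.X v p)) E4 = E4" by (simp only: SA.eval_X)
  moreover have fp: "finite (SA.X v p)" "SA.X v p \<noteq> {}" using SA.X_fin by auto
  ultimately have "\<forall>a\<in>SA.X v p. S_add a E4 = E4" by (simp only: SA.F_le[OF fp])
  moreover have "finite A" "A \<noteq> {}" using trm_fin[of p] Ap by blast+
  then have "SA.pv v A = E3" using S_pv[of A v] by (simp add: v_def)
  moreover have "SA.pv v A \<in> SA.X v p" using Ap unfolding SA.X_def by blast
  ultimately show False by (auto simp: S_add_simps)
qed

lemma sat_inst: "satisfies add mul p q \<Longrightarrow>
  eval add mul (\<lambda>n. if n = 0 then x else if n = 1 then y else z) p =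
  eval add mul (\<lambda>n. if n = 0 then x else if n = 1 then y else z) q"
  by (simp add: satisfies_def)

theorem proposition7p1:
  fixes add mul :: "'a \<Rightarrow> 'a \<Rightarrow> 'a"
  shows "in_V_S add mul \<longleftrightarrow>
           ai_semiring add mul \<and>
           satisfies add mul (Times tx ty) (Times ty tx) \<and>
           satisfies add mul (Times (Times tx tx) ty) (Times tx ty) \<and>
           satisfies add mul (Times tx ty) (Plus (Times tx ty) (Times (Times tx ty) tz))"
proof
  assume V: "in_V_S add mul"
  have T: "\<And>p q. satisfies S_add S_mul p q \<Longrightarrow> satisfies add mul p q"
    using V unfolding in_V_S_def by blast
  have "satisfies add mul (Plus tx tx) tx"
    by (rule T) (simp add: satisfies_def SA.idem)
  from sat_inst[OF this] have a1: "\<And>x. add x x = x" by simp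
  have "satisfies add mul (Plus tx ty) (Plus ty tx)"
    by (rule T) (simp add: satisfies_def SA.acomm)
  from sat_inst[OF this] have a2: "\<And>x y. add x y = add y x" by simp
  have "satisfies add mul (Plus (Plus tx ty) tz) (Plus tx (Plus ty tz))"
    by (rule T) (simp add: satisfies_def SA.aassoc)
  from sat_inst[OF this] have a3: "\<And>x y z. add (add x y) z = add x (add y z)" by simp
  have "satisfies add mul (Times (Times tx ty) tz) (Times tx (Times ty tz))"
    by (rule T) (simp add: satisfies_def SA.massoc)
  from sat_inst[OF this] have a4: "\<And>x y z. mul (mul x y) z = mul x (mul y z)" by simp
  have "satisfies add mul (Times tx (Plus ty tz)) (Plus (Times tx ty) (Times tx tz))"
    by (rule T) (simp add: satisfies_def SA.distl)
  from sat_inst[OF this] have a5: "\<And>x y z. mul x (add y z) = add (mul x y) (mul x z)" by simp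
  have "satisfies add mul (Times (Plus tx ty) tz) (Plus (Times tx tz) (Times ty tz))"
    by (rule T) (simp add: satisfies_def SA.distr)
  from sat_inst[OF this] have a6: "\<And>x y z. mul (add x y) z = add (mul x z) (mul y z)" by simp
  have "ai_semiring add mul" unfolding ai_semiring_def using a1 a2 a3 a4 a5 a6 by blast
  moreover have "satisfies add mul (Times tx ty) (Times ty tx)"
    by (rule T) (simp add: satisfies_def SA.mcomm)
  moreover have "satisfies add mul (Times (Times tx tx) ty) (Times tx ty)"
    by (rule T) (simp add: satisfies_def SA.sq)
  moreover have "satisfies add mul (Times tx ty) (Plus (Times tx ty) (Times (Times tx ty) tz))"
    by (rule T) (simp add: satisfies_def SA.absb[symmetric])
  ultimately show "ai_semiring add mul \<and>
           satisfies add mul (Times tx ty) (Times ty tx) \<and>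
           satisfies add mul (Times (Times tx tx) ty) (Times tx ty) \<and>
           satisfies add mul (Times tx ty) (Plus (Times tx ty) (Times (Times tx ty) tz))" by blast
next
  assume R: "ai_semiring add mul \<and>
           satisfies add mul (Times tx ty) (Times ty tx) \<and>
           satisfies add mul (Times (Times tx tx) ty) (Times tx ty) \<and>
           satisfies add mul (Times tx ty) (Plus (Times tx ty) (Times (Times tx ty) tz))"
  from R have c: "\<And>x y. mul x y = mul y x"
    using sat_inst[of add mul "Times tx ty" "Times ty tx"] by simp
  from R have s: "\<And>x y. mul (mul x x) y = mul x y"
    using sat_inst[of add mul "Times (Times tx tx) ty" "Times tx ty"] by simp
  from R have b: "\<And>x y z. mul x y = add (mul x y) (mul (mul x y) z)"
    using sat_inst[of add mul "Times tx ty" "Plus (Times tx ty) (Times (Times tx ty) tz)"] by simp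
  have "alg add mul"
    using R c s b unfolding ai_semiring_def alg_def by blast
  then interpret A: alg add mul .
  show "in_V_S add mul" unfolding in_V_S_def
  proof (intro allI impI)
    fix p q assume sat: "satisfies S_add S_mul p q"
    then have sat': "satisfies S_add S_mul q p" by (simp add: satisfies_def)
    have "Lt p = Lt q" using S_Lt[OF sat] S_Lt[OF sat'] by blast
    moreover have "\<forall>A\<in>Mt p. \<exists>B\<in>Mt q. B \<subseteq> A" using S_Mt[OF sat] by blast
    moreover have "\<forall>A\<in>Mt q. \<exists>B\<in>Mt p. B \<subseteq> A" using S_Mt[OF sat'] by blast
    ultimately show "satisfies add mul p q" unfolding satisfies_def using A.eq_crit by blast
  qed
qed

end
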